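(* Let $\hat V:[0,T]\times\mathbb{R}^n\times\mathbb{R}^n\to\mathbb{R}$, together with a feedback map $\hat\pi:[0,T]\times\mathbb{R}^n\times\mathbb{R}^n\times U\to U$, be a funnel generator function with respect to the time-varying region $R^s(\cdot)$ and level $\beta$ (as defined in the context). Let $(x_r(\cdot),u_r(\cdot))$ be a reference on $[0,T]$ with $x_r$ differentiable, $\dot x_r(t)=f_r(x_r(t),u_r(t))$ and $(x_r(t),u_r(t))\in R^s(t)$ for all $t\in[0,T]$. Define the feedback law $\pi(t,x)=\hat\pi(t,x,x_r(t),u_r(t))$ and the time-varying set $$\mathcal F(t)=\{x\in\mathbb{R}^n : \hat V(t,x,x_r(t))\le\beta\},\qquad t\in[0,T].$$ Then $\mathcal F$ is a funnel (region of finite-time invariance) for the closed-loop system $\dot x=f(x,\pi(t,x))$ that covers the reference: (i) $x_r(t)\in\mathcal F(t)$ for all $t\in[0,T]$; and (ii) for every $t\in[0,T]$ and every closed-loop solution $x(\cdot)$ defined on $[t,T]$, if $x(t)\in\mathcal F(t)$ then $x(t')\in\mathcal F(t')$ for all $t'\in[t,T]$.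
   Context: The plant is $\dot x=f(x,u)$ with state $x\in\mathbb{R}^n$, input $u\in U\subseteq\mathbb{R}^m$, $f$ polynomial. The reference (planning) model is $\dot x_r=f_r(x_r,u_r)$ with $x_r\in\mathbb{R}^n$ (reference state space equals the plant state space) and $u_r\in U$; write $r=(x_r,u_r)$. $T>0$ is a finite horizon and $R^s:[0,T]\to\mathcal P(\mathbb{R}^n\times U)$ is a given time-varying set of admissible reference state–input pairs. Fix $\beta\in\mathbb{R}$. A funnel generator function w.r.t. $R^s(\cdot)$ is a continuously differentiable function $\hat V:[0,T]\times\mathbb{R}^n\times\mathbb{R}^n\to\mathbb{R}$, radially unbounded in $x$, together with a continuous map $\hat\pi:[0,T]\times\mathbb{R}^n\times\mathbb{R}^n\times U\to U$, such that for all $t\in[0,T]$: (1) for all $x\in\mathbb{R}^n$, $\hat V(t,x,x)<\beta$; (2) for all $(x_r,u_r)\in R^s(t)$ and all $x$ with $\hat V(t,x,x_r)=\beta$, $$\frac{d\hat V}{dt}:=\nabla_x\hat V(t,x,x_r)\cdot f\big(x,\hat\pi(t,x,x_r,u_r)\big)+\nabla_{x_r}\hat V(t,x,x_r)\cdot f_r(x_r,u_r)+\frac{\partial\hat V}{\partial t}(t,x,x_r)<0.$$ A funnel is a map $\mathcal F:[0,T]\to\mathcal P(\mathbb{R}^n)$ such that for every $t\in[0,T]$, $x(t)\in\mathcal F(t)$ implies $x(t')\in\mathcal F(t')$ for all $t'\in[t,T]$ along closed-loop trajectories; it covers $x_r(\cdot)$ if $x_r(t)\in\mathcal F(t)$ for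 all $t$. *)

theory Defs
  imports "HOL-Analysis.Analysis"
begin

inductive real_poly_fun :: "('a::euclidean_space \<Rightarrow> real) \<Rightarrow> bool" where
  const: "real_poly_fun (\<lambda>z. c)"
| coord: "i \<in> Basis \<Longrightarrow> real_poly_fun (\<lambda>z. z \<bullet> i)"
| add: "real_poly_fun p \<Longrightarrow> real_poly_fun q \<Longrightarrow> real_poly_fun (\<lambda>z. p z + q z)"
| mult: "real_poly_fun p \<Longrightarrow> real_poly_fun q \<Longrightarrow> real_poly_fun (\<lambda>z. p z * q z)"

definition polynomial_field :: "(real^'n \<Rightarrow> real^'m \<Rightarrow> real^'n) \<Rightarrow> bool" where
  "polynomial_field f \<longleftrightarrow> (\<forall>i. real_poly_fun (\<lambda>(z::(real^'n) \<times> (real^'m)). f (fst z) (snd z) $ i))"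

text \<open>The function Vh is
  continuously differentiable on [0,T] x R^n x R^n with (Frechet) derivative DV, which is
  continuous; gradients are obtained by applying DV to coordinate directions.\<close>
definition funnel_generator ::
  "(real^'n \<Rightarrow> real^'m \<Rightarrow> real^'n) \<Rightarrow> (real^'n \<Rightarrow> real^'m \<Rightarrow> real^'n) \<Rightarrow> (real^'m) set \<Rightarrow>
   real \<Rightarrow> (real \<Rightarrow> ((real^'n) \<times> (real^'m)) set) \<Rightarrow> real \<Rightarrow>
   (real \<Rightarrow> real^'n \<Rightarrow> real^'n \<Rightarrow> real) \<Rightarrow>
   (real \<times> (real^'n) \<times> (real^'n) \<Rightarrow> (real \<times> (real^'n) \<times> (real^'n)) \<Rightarrow>\<^sub>L real) \<Rightarrow>
   (real \<Rightarrow> real^'n \<Rightarrow> real^'n \<Rightarrow> real^'m \<Rightarrow> real^'m) \<Rightarrow> bool" where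
  "funnel_generator f fr U T Rs \<beta> Vh DV pih \<longleftrightarrow>
     \<comment> \<open>continuous differentiability\<close>
     (\<forall>p \<in> {0..T} \<times> UNIV \<times> UNIV.
        ((\<lambda>(t,x,xr). Vh t x xr) has_derivative blinfun_apply (DV p)) (at p within {0..T} \<times> UNIV \<times> UNIV)) \<and>
     continuous_on ({0..T} \<times> UNIV \<times> UNIV) DV \<and>
     \<comment> \<open>radial unboundedness in x\<close>
     (\<forall>t\<in>{0..T}. \<forall>xr. filterlim (\<lambda>x. Vh t x xr) at_top at_infinity) \<and>
     \<comment> \<open>pih is a continuous map into U\<close>
     continuous_on ({0..T} \<times> UNIV \<times> UNIV \<times> U) (\<lambda>(t,x,xr,u). pih t x xr u) \<and>
     (\<forall>t\<in>{0..T}. \<forall>x xr. \<forall>u\<in>U. pih t x xr u \<in> U) \<and>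
     \<comment> \<open>condition (1)\<close>
     (\<forall>t\<in>{0..T}. \<forall>x. Vh t x x < \<beta>) \<and>
     \<comment> \<open>condition (2)\<close>
     (\<forall>t\<in>{0..T}. \<forall>xr ur x. (xr, ur) \<in> Rs t \<longrightarrow> Vh t x xr = \<beta> \<longrightarrow>
        blinfun_apply (DV (t,x,xr)) (0, f x (pih t x xr ur), 0)
        + blinfun_apply (DV (t,x,xr)) (0, 0, fr xr ur)
        + blinfun_apply (DV (t,x,xr)) (1, 0, 0) < 0)"

end

theory Submission
  imports Defs
begin

lemma barrier:
  fixes g :: "real \<Rightarrow> real"
  assumes der: "\<forall>s\<in>{t..T}. \<exists>l. (g has_real_derivative l) (at s within {t..T}) \<and> (g s = 0 \<longrightarrow> l < 0)"
    and g0: "g t \<le> 0" and s1: "s1 \<in> {t..T}"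
  shows "g s1 \<le> 0"
proof (rule ccontr)
  assume pos: "\<not> g s1 \<le> 0"
  have cont: "continuous_on {t..T} g"
    using der by (meson DERIV_continuous continuous_on_eq_continuous_within)
  define Z where "Z = {s\<in>{t..s1}. g s \<le> 0}"
  have contZ: "continuous_on {t..s1} g" using cont s1 by (auto intro: continuous_on_subset)
  have clZ: "closed Z" unfolding Z_def
    using continuous_closed_preimage_constant[of "{t..s1}" g] contZ
    by (intro continuous_on_closed_Collect_le) (auto intro: continuous_on_const)
  have tZ: "t \<in> Z" using g0 s1 by (auto simp: Z_def)
  have bdd: "bdd_above Z" unfolding Z_def by (auto intro: bdd_aboveI[of _ s1])
  define s0 where "s0 = Sup Z"
  have s0Z: "s0 \<in> Z" unfolding s0_def using closed_contains_Sup[OF _ bdd clZ] tZ by auto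
  have ub: "\<And>s. s \<in> Z \<Longrightarrow> s \<le> s0" unfolding s0_def using bdd by (auto intro: cSup_upper)
  have s0le: "g s0 \<le> 0" "t \<le> s0" "s0 \<le> s1" using s0Z by (auto simp: Z_def)
  have lt: "s0 < s1" using s0le pos by (cases "s0 = s1") auto
  have s0T: "s0 \<in> {t..T}" using s0le s1 by auto
  have "\<exists>d>0. \<forall>h>0. s0 + h \<in> {t..T} \<longrightarrow> h < d \<longrightarrow> g (s0 + h) \<le> 0"
  proof (cases "g s0 = 0")
    case True
    obtain l where l: "(g has_real_derivative l) (at s0 within {t..T})" "l < 0"
      using der s0T True by blast
    from has_real_derivative_neg_dec_right[OF l] True show ?thesis
      by (metis less_eq_real_def)
  next
    case False
    hence neg: "g s0 < 0" using s0le by auto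
    from cont s0T have "\<forall>e>0. \<exists>d>0. \<forall>x'\<in>{t..T}. dist x' s0 < d \<longrightarrow> dist (g x') (g s0) < e"
      unfolding continuous_on_iff by blast
    then obtain d where d: "d > 0" "\<forall>x'\<in>{t..T}. dist x' s0 < d \<longrightarrow> dist (g x') (g s0) < - g s0"
      using neg by (meson neg_0_less_iff_less)
    show ?thesis
    proof (intro exI[of _ d] conjI allI impI d(1))
      fix h :: real assume h: "h > 0" "s0 + h \<in> {t..T}" "h < d"
      then have "dist (g (s0+h)) (g s0) < - g s0" using d by (auto simp: dist_real_def)
      then show "g (s0 + h) \<le> 0" by (auto simp: dist_real_def)
    qed
  qed
  then obtain d where d: "d > 0" "\<forall>h>0. s0 + h \<in> {t..T} \<longrightarrow> h < d \<longrightarrow> g (s0 + h) \<le> 0" by blast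
  define h where "h = min (d/2) (s1 - s0)"
  have h: "h > 0" "h < d" "s0 + h \<in> {t..T}" "s0 + h \<le> s1"
    using d lt s0le s1 by (auto simp: h_def)
  then have "s0 + h \<in> Z" using d unfolding Z_def using s0le by auto
  then show False using ub h by fastforce
qed

theorem mainTheorem1:
  fixes f fr :: "real^'n \<Rightarrow> real^'m \<Rightarrow> real^'n"
    and U :: "(real^'m) set" and T \<beta> :: real
    and Rs :: "real \<Rightarrow> ((real^'n) \<times> (real^'m)) set"
    and Vh :: "real \<Rightarrow> real^'n \<Rightarrow> real^'n \<Rightarrow> real"
    and DV :: "real \<times> (real^'n) \<times> (real^'n) \<Rightarrow> (real \<times> (real^'n) \<times> (real^'n)) \<Rightarrow>\<^sub>L real"
    and pih :: "real \<Rightarrow> real^'n \<Rightarrow> real^'n \<Rightarrow> real^'m \<Rightarrow> real^'m"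
    and xr :: "real \<Rightarrow> real^'n" and ur :: "real \<Rightarrow> real^'m"
  assumes "polynomial_field f"
    and "T > 0"
    and "\<forall>t\<in>{0..T}. Rs t \<subseteq> UNIV \<times> U"
    and "funnel_generator f fr U T Rs \<beta> Vh DV pih"
    and "\<forall>t\<in>{0..T}. (xr has_vector_derivative fr (xr t) (ur t)) (at t within {0..T})"
    and "\<forall>t\<in>{0..T}. (xr t, ur t) \<in> Rs t"
  shows "(\<forall>t\<in>{0..T}. xr t \<in> {x. Vh t x (xr t) \<le> \<beta>}) \<and>
         (\<forall>t\<in>{0..T}. \<forall>x :: real \<Rightarrow> real^'n.
            (\<forall>s\<in>{t..T}. (x has_vector_derivative f (x s) (pih s (x s) (xr s) (ur s))) (at s within {t..T}))
            \<longrightarrow> x t \<in> {y. Vh t y (xr t) \<le> \<beta>}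
            \<longrightarrow> (\<forall>t'\<in>{t..T}. x t' \<in> {y. Vh t' y (xr t') \<le> \<beta>}))"
proof -
  have fg: "funnel_generator f fr U T Rs \<beta> Vh DV pih" by fact
  note fgd = fg[unfolded funnel_generator_def]
  have dV: "\<forall>p \<in> {0..T} \<times> UNIV \<times> UNIV.
        ((\<lambda>(t,x,xr). Vh t x xr) has_derivative blinfun_apply (DV p)) (at p within {0..T} \<times> UNIV \<times> UNIV)"
    using fgd by blast
  have c1: "\<forall>t\<in>{0..T}. \<forall>x. Vh t x x < \<beta>" using fgd by blast
  have c2: "\<forall>t\<in>{0..T}. \<forall>xr ur x. (xr, ur) \<in> Rs t \<longrightarrow> Vh t x xr = \<beta> \<longrightarrow>
        blinfun_apply (DV (t,x,xr)) (0, f x (pih t x xr ur), 0)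
        + blinfun_apply (DV (t,x,xr)) (0, 0, fr xr ur)
        + blinfun_apply (DV (t,x,xr)) (1, 0, 0) < 0" using fgd by blast
  have part1: "\<forall>t\<in>{0..T}. xr t \<in> {x. Vh t x (xr t) \<le> \<beta>}"
    using c1 by (auto intro: less_imp_le)
  have part2: "\<forall>t'\<in>{t..T}. x t' \<in> {y. Vh t' y (xr t') \<le> \<beta>}"
    if t: "t \<in> {0..T}"
      and dx: "\<forall>s\<in>{t..T}. (x has_vector_derivative f (x s) (pih s (x s) (xr s) (ur s))) (at s within {t..T})"
      and xt: "x t \<in> {y. Vh t y (xr t) \<le> \<beta>}"
    for t and x :: "real \<Rightarrow> real^'n"
  proof -
    define g where "g s = Vh s (x s) (xr s) - \<beta>" for s
    have der: "\<forall>s\<in>{t..T}. \<exists>l. (g has_real_derivative l) (at s within {t..T}) \<and> (g s = 0 \<longrightarrow> l < 0)"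
    proof
      fix s assume s: "s \<in> {t..T}"
      define x' where "x' = f (x s) (pih s (x s) (xr s) (ur s))"
      define xr' where "xr' = fr (xr s) (ur s)"
      define p where "p = (s, x s, xr s)"
      have sT: "s \<in> {0..T}" using s t by auto
      have d1: "(x has_derivative (\<lambda>h. h *\<^sub>R x')) (at s within {t..T})"
        using dx s by (simp add: has_vector_derivative_def x'_def)
      have d2: "(xr has_derivative (\<lambda>h. h *\<^sub>R xr')) (at s within {t..T})"
        using has_vector_derivative_within_subset[of xr _ s "{0..T}" "{t..T}"] assms(5) sT t
        by (auto simp: has_vector_derivative_def xr'_def)
      have dp: "((\<lambda>s. (s, x s, xr s)) has_derivative (\<lambda>h. (h, h *\<^sub>R x', h *\<^sub>R xr'))) (at s within {t..T})"
        by (intro has_derivative_Pair has_derivative_ident d1 d2)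
      have "((\<lambda>s. (\<lambda>(t,x,xr). Vh t x xr) (s, x s, xr s)) has_derivative
              (\<lambda>h. blinfun_apply (DV (s, x s, xr s)) (h, h *\<^sub>R x', h *\<^sub>R xr'))) (at s within {t..T})"
        proof (rule has_derivative_in_compose2[OF _ _ s dp])
          show "(\<lambda>s. (s, x s, xr s)) ` {t..T} \<subseteq> {0..T} \<times> UNIV \<times> UNIV" using t by auto
        next
          fix q assume "q \<in> {0..T} \<times> (UNIV::(real^'n) set) \<times> (UNIV::(real^'n) set)"
          then show "((\<lambda>(t,x,xr). Vh t x xr) has_derivative blinfun_apply (DV q)) (at q within {0..T} \<times> UNIV \<times> UNIV)"
            using dV by blast
        qed
      moreover have "(\<lambda>h. blinfun_apply (DV (s, x s, xr s)) (h, h *\<^sub>R x', h *\<^sub>R xr'))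
                   = (*) (blinfun_apply (DV p) (1, x', xr'))"
      proof
        fix h :: real
        have "(h, h *\<^sub>R x', h *\<^sub>R xr') = h *\<^sub>R (1::real, x', xr')" by simp
        then show "blinfun_apply (DV (s, x s, xr s)) (h, h *\<^sub>R x', h *\<^sub>R xr')
                   = blinfun_apply (DV p) (1, x', xr') * h"
          using blinfun.scaleR_right[of "DV (s, x s, xr s)" h "(1::real, x', xr')"]
          by (simp add: p_def mult.commute)
      qed
      ultimately have "((\<lambda>s. Vh s (x s) (xr s)) has_real_derivative blinfun_apply (DV p) (1, x', xr')) (at s within {t..T})"
        by (simp add: has_field_derivative_def)
      then have D: "(g has_real_derivative blinfun_apply (DV p) (1, x', xr')) (at s within {t..T})"
        unfolding g_def by (intro derivative_eq_intros) auto
      have "g s = 0 \<longrightarrow> blinfun_apply (DV p) (1, x', xr') < 0"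
      proof
        assume "g s = 0"
        then have "Vh s (x s) (xr s) = \<beta>" by (simp add: g_def)
        then have "blinfun_apply (DV p) (0, x', 0) + blinfun_apply (DV p) (0, 0, xr')
              + blinfun_apply (DV p) (1, 0, 0) < 0"
          using c2 sT assms(6) unfolding p_def x'_def xr'_def by blast
        moreover have "(1::real, x', xr') = (0, x', 0) + (0, 0, xr') + (1, 0, 0)" by simp
        ultimately show "blinfun_apply (DV p) (1, x', xr') < 0"
          by (metis blinfun.add_right)
      qed
      with D show "\<exists>l. (g has_real_derivative l) (at s within {t..T}) \<and> (g s = 0 \<longrightarrow> l < 0)"
        by blast
    qed
    have "g t \<le> 0" using xt by (simp add: g_def)
    then show ?thesis using barrier[OF der] by (auto simp: g_def)
  qed
  show ?thesis using part1 part2 by blast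
qed

end
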